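(* Let $G\neq0$ be a symmetric finite positive measure on $\mathbb{R}$ whose restriction to $(0,+\infty)$ has a density that is real-analytic and strictly positive on $(0,+\infty)$, and let $\mu$ be the $\boxplus_\lambda$-infinitely divisible measure with Lévy measure $G$. Then the restriction of $C_\mu$ to $\mathbb{C}^+$ extends analytically to a neighbourhood of every point $x\in(0,+\infty)$, and the extension satisfies $\operatorname{Im}C_\mu(x)>0$ for all $x\in(0,+\infty)$.
   Context: Fix $\lambda\in(0,1)$. For a symmetric probability measure $\mu$, $C_\mu$ is its rectangular $R$-transform with ratio $\lambda$. A symmetric probability measure $\mu$ is $\boxplus_\lambda$-infinitely divisible with Lévy measure $G$ (a symmetric finite positive measure, uniquely determined) iff $C_\mu$ extends to $\mathbb{C}\setminus[0,\infty)$ and $C_\mu(z)=z\int_{\mathbb{R}}\frac{1+t^2}{1-zt^2}dG(t)$ for all $z\in\mathbb{C}\setminus[0,\infty)$; every such $G$ arises from some $\mu$. *)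

theory Defs
  imports "HOL-Analysis.Analysis"
begin

definition real_analytic_on :: "(real \<Rightarrow> real) \<Rightarrow> real set \<Rightarrow> bool" where
  "real_analytic_on g S \<longleftrightarrow>
     (\<forall>x\<in>S. \<exists>r>0. \<exists>a::nat \<Rightarrow> real. \<forall>y. \<bar>y - x\<bar> < r \<longrightarrow> (\<lambda>n. a n * (y - x) ^ n) sums g y)"

definition symmetric_finite_measure :: "real measure \<Rightarrow> bool" where
  "symmetric_finite_measure G \<longleftrightarrow>
     sets G = sets borel \<and> finite_measure G \<and>
     (\<forall>A\<in>sets borel. emeasure G (uminus ` A) = emeasure G A)"

definition levy_R :: "real measure \<Rightarrow> complex \<Rightarrow> complex" where
  "levy_R G z = z * integral\<^sup>L G (\<lambda>t. (1 + complex_of_real (t\<^sup>2)) / (1 - z * complex_of_real (t\<^sup>2)))"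

definition slit_plane :: "complex set" where
  "slit_plane = {z. \<not> (Im z = 0 \<and> Re z \<ge> 0)}"

end

theory Submission
  imports Defs
begin

lemma powser_ext_summable:
  fixes c :: "nat \<Rightarrow> real" and t0 \<rho> :: real
  assumes rho: "\<rho> > 0" and sums: "\<forall>y. \<bar>y - t0\<bar> < \<rho> \<longrightarrow> (\<lambda>n. c n * (y - t0)^n) sums g y"
  shows "norm (\<zeta>::complex) < \<rho> \<Longrightarrow> summable (\<lambda>n. ((diffs^^k) (\<lambda>n. complex_of_real (c n))) n * \<zeta>^n)"
proof (induction k arbitrary: \<zeta>)
  case 0
  define s where "s = (norm \<zeta> + \<rho>)/2"
  have s: "norm \<zeta> < s" "s < \<rho>" "s \<ge> 0" using 0 rho norm_ge_zero[of \<zeta>] by (auto simp: s_def simp del: norm_ge_zero)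
  have "(\<lambda>n. c n * ((t0 + s) - t0)^n) sums g (t0 + s)"
    using sums[rule_format, of "t0 + s"] s by simp
  hence "summable (\<lambda>n. c n * s^n)" by (simp add: sums_summable)
  hence "summable (\<lambda>n. complex_of_real (c n) * (complex_of_real s)^n)"
    unfolding of_real_power[symmetric] of_real_mult[symmetric] summable_complex_of_real .
  from powser_insidea[OF this, of \<zeta>] s have "summable (\<lambda>n. norm (complex_of_real (c n) * \<zeta>^n))"
    by simp
  thus ?case by (simp add: summable_norm_cancel)
next
  case (Suc k)
  show ?case using termdiff_converges[of \<zeta> \<rho>, OF Suc.prems Suc.IH] by simp
qed

lemma powser_ext_deriv:
  fixes c :: "nat \<Rightarrow> real" and t0 \<rho> :: real and z :: complex
  assumes rho: "\<rho> > 0" and sums: "\<forall>y. \<bar>y - t0\<bar> < \<rho> \<longrightarrow> (\<lambda>n. c n * (y - t0)^n) sums g y"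
    and z: "norm (z - complex_of_real t0) < \<rho>"
  shows "((\<lambda>\<zeta>. \<Sum>n. ((diffs^^k) (\<lambda>n. complex_of_real (c n))) n * (\<zeta> - complex_of_real t0)^n) has_field_derivative
          (\<Sum>n. ((diffs^^(Suc k)) (\<lambda>n. complex_of_real (c n))) n * (z - complex_of_real t0)^n)) (at z)"
proof -
  let ?c = "(diffs^^k) (\<lambda>n. complex_of_real (c n))"
  have "((\<lambda>\<zeta>. \<Sum>n. ?c n * \<zeta>^n) has_field_derivative (\<Sum>n. diffs ?c n * (z - complex_of_real t0)^n)) (at (z - complex_of_real t0))"
    by (rule termdiffs_strong'[OF _ z]) (rule powser_ext_summable[OF rho sums])
  moreover have "((\<lambda>\<zeta>. \<zeta> - complex_of_real t0) has_field_derivative 1) (at z)"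
    by (auto intro!: derivative_eq_intros)
  ultimately show ?thesis using DERIV_chain2[of "\<lambda>\<zeta>. \<Sum>n. ?c n * \<zeta>^n"] by fastforce
qed

lemma sym_integral:
  fixes f :: "real \<Rightarrow> complex"
  assumes symG: "symmetric_finite_measure G" and f: "f \<in> borel_measurable borel"
  shows "integral\<^sup>L G (\<lambda>t. f (-t)) = integral\<^sup>L G f"
proof -
  have sG: "sets G = sets borel" using symG by (simp add: symmetric_finite_measure_def)
  have spG: "space G = UNIV" using sets_eq_imp_space_eq[OF sG] by simp
  have m: "(uminus :: real \<Rightarrow> real) \<in> measurable G borel"
    by (subst measurable_cong_sets[OF sG refl]) simp
  have "distr G borel uminus = G"
  proof (rule measure_eqI)
    show "sets (distr G borel uminus) = sets G" using sG by simp
    fix A assume "A \<in> sets (distr G borel uminus)"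
    hence A: "A \<in> sets borel" by simp
    have "uminus -` A \<inter> space G = uminus ` A"
      by (auto simp: spG image_iff) (metis minus_minus)
    hence "emeasure (distr G borel uminus) A = emeasure G (uminus ` A)"
      using emeasure_distr[OF m A] by simp
    also have "\<dots> = emeasure G A" using symG A by (simp add: symmetric_finite_measure_def)
    finally show "emeasure (distr G borel uminus) A = emeasure G A" .
  qed
  hence "integral\<^sup>L G f = integral\<^sup>L (distr G borel uminus) f" by simp
  also have "\<dots> = integral\<^sup>L G (\<lambda>t. f (-t))" by (rule integral_distr[OF m f])
  finally show ?thesis by simp
qed

lemma dens_integral:
  fixes h :: "real \<Rightarrow> complex" and g :: "real \<Rightarrow> real"
  assumes symG: "symmetric_finite_measure G"
    and dens: "\<forall>A\<in>sets borel. emeasure G (A \<inter> {0<..}) =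
                        (\<integral>\<^sup>+ x. indicator (A \<inter> {0<..}) x * ennreal (g x) \<partial>lborel)"
    and a: "0 < a" and gc: "continuous_on {a..b} g" and gpos: "\<forall>t\<in>{a..b}. g t \<ge> 0" and hc: "continuous_on {a..b} h"
  shows "integral\<^sup>L G (\<lambda>t. indicator {a..b} t *\<^sub>R h t) = integral {a..b} (\<lambda>t. g t *\<^sub>R h t)"
proof -
  let ?S = "{a..b}"
  have sG: "sets G = sets borel" using symG by (simp add: symmetric_finite_measure_def)
  have hm: "(\<lambda>t. indicator ?S t *\<^sub>R h t) \<in> borel_measurable borel"
    by (rule borel_measurable_continuous_on_indicator[OF _ hc]) simp
  have gm: "(\<lambda>t. indicator ?S t *\<^sub>R g t) \<in> borel_measurable borel"
    by (rule borel_measurable_continuous_on_indicator[OF _ gc]) simp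
  hence gm': "(\<lambda>t. indicator ?S t * g t) \<in> borel_measurable borel" by simp
  have im: "(\<lambda>t. indicator ?S t :: real) \<in> borel_measurable G"
    by (subst measurable_cong_sets[OF sG refl]) simp
  define M1 where "M1 = density lborel (\<lambda>t. ennreal (indicator ?S t * g t))"
  define M2 where "M2 = density G (\<lambda>t. ennreal (indicator ?S t))"
  have "M2 = M1"
  proof (rule measure_eqI)
    show "sets M2 = sets M1" using sG by (simp add: M1_def M2_def)
    fix A assume "A \<in> sets M2"
    hence A: "A \<in> sets borel" using sG by (simp add: M2_def)
    have AG: "A \<in> sets G" using A sG by simp
    have "emeasure M2 A = (\<integral>\<^sup>+ t. ennreal (indicator ?S t) * indicator A t \<partial>G)"
      unfolding M2_def by (rule emeasure_density[OF _ AG]) (use im in auto)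
    also have "\<dots> = (\<integral>\<^sup>+ t. indicator (?S \<inter> A) t \<partial>G)"
      by (intro nn_integral_cong) (auto split: split_indicator)
    also have "\<dots> = emeasure G (?S \<inter> A)"
      by (rule nn_integral_indicator) (use A sG in auto)
    also have "\<dots> = emeasure G ((?S \<inter> A) \<inter> {0<..})"
      using a by (intro arg_cong[where f="emeasure G"]) auto
    also have "\<dots> = (\<integral>\<^sup>+ x. indicator ((?S \<inter> A) \<inter> {0<..}) x * ennreal (g x) \<partial>lborel)"
      using dens A by auto
    also have "\<dots> = (\<integral>\<^sup>+ t. ennreal (indicator ?S t * g t) * indicator A t \<partial>lborel)"
      using a by (intro nn_integral_cong) (auto split: split_indicator)
    also have "\<dots> = emeasure M1 A"
      unfolding M1_def by (rule emeasure_density[symmetric]) (use A gm' in auto)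
    finally show "emeasure M2 A = emeasure M1 A" .
  qed
  have "integral\<^sup>L G (\<lambda>t. indicator ?S t *\<^sub>R h t) =
        integral\<^sup>L G (\<lambda>t. indicator ?S t *\<^sub>R (indicator ?S t *\<^sub>R h t))"
    by (intro Bochner_Integration.integral_cong) (auto split: split_indicator)
  also have "\<dots> = integral\<^sup>L M2 (\<lambda>t. indicator ?S t *\<^sub>R h t)"
    unfolding M2_def
    by (rule integral_density[symmetric]) (use hm im measurable_cong_sets[OF sG refl] in auto)
  also have "\<dots> = integral\<^sup>L M1 (\<lambda>t. indicator ?S t *\<^sub>R h t)" using \<open>M2 = M1\<close> by simp
  also have "\<dots> = integral\<^sup>L lborel (\<lambda>t. (indicator ?S t * g t) *\<^sub>R (indicator ?S t *\<^sub>R h t))"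
    unfolding M1_def
    by (rule integral_density) (use hm gm' gpos in \<open>auto split: split_indicator\<close>)
  also have "\<dots> = integral\<^sup>L lborel (\<lambda>t. indicator ?S t *\<^sub>R (g t *\<^sub>R h t))"
    by (intro Bochner_Integration.integral_cong) (auto split: split_indicator)
  also have "\<dots> = integral ?S (\<lambda>t. g t *\<^sub>R h t)"
  proof -
    have "set_integrable lborel ?S (\<lambda>t. g t *\<^sub>R h t)"
      unfolding set_integrable_def
      by (rule borel_integrable_compact) (auto intro!: continuous_intros gc hc)
    from set_borel_integral_eq_integral(2)[OF this] show ?thesis
      by (simp add: set_lebesgue_integral_def)
  qed
  finally show ?thesis .
qed

lemma bounded_integral_norm:
  fixes f :: "real \<Rightarrow> complex"
  assumes fm: "finite_measure M" and m: "f \<in> borel_measurable M" and b: "\<And>t. norm (f t) \<le> B"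
  shows "integrable M f" "norm (integral\<^sup>L M f) \<le> B * measure M (space M)"
proof -
  interpret finite_measure M by (rule fm)
  show i: "integrable M f" by (rule integrable_const_bound[where B=B]) (use b m in auto)
  have "norm (integral\<^sup>L M f) \<le> integral\<^sup>L M (\<lambda>t. norm (f t))" by (rule integral_norm_bound)
  also have "\<dots> \<le> integral\<^sup>L M (\<lambda>_. B)"
    by (rule integral_mono) (use i b in auto)
  also have "\<dots> = B * measure M (space M)" by simp
  finally show "norm (integral\<^sup>L M f) \<le> B * measure M (space M)" .
qed

lemma far_meas:
  fixes \<phi> :: "real \<Rightarrow> real"
  assumes "\<phi> \<in> borel_measurable borel"
  shows "(\<lambda>t. (1 + complex_of_real (t\<^sup>2)) / (1 - z * complex_of_real (t\<^sup>2)) * complex_of_real (\<phi> t))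
      \<in> borel_measurable borel"
    "(\<lambda>t. (1 + complex_of_real (t\<^sup>2)) * complex_of_real (t\<^sup>2) / (1 - z * complex_of_real (t\<^sup>2))^2 * complex_of_real (\<phi> t))
      \<in> borel_measurable borel"
  using assms by measurable

lemma far_bound_f:
  fixes z :: complex and s c :: real
  assumes c: "c > 0" and s: "s \<ge> 0" and b: "cmod (1 - z * complex_of_real s) \<ge> c * (1 + s)"
  shows "cmod ((1 + complex_of_real s) / (1 - z * complex_of_real s)) \<le> 1 / c"
proof -
  have p: "c * (1 + s) > 0" using c s by simp
  have n1: "cmod (1 + complex_of_real s) = 1 + s"
    by (metis abs_of_nonneg norm_of_real of_real_1 of_real_add s add_nonneg_nonneg zero_le_one)
  have "cmod ((1 + complex_of_real s) / (1 - z * complex_of_real s)) = (1+s) / cmod (1 - z * complex_of_real s)"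
    by (simp only: norm_divide n1)
  also have "\<dots> \<le> (1+s) / (c * (1 + s))"
    by (rule divide_left_mono[OF b]) (use p b s in \<open>auto intro!: mult_pos_pos\<close>)
  also have "\<dots> = 1 / c" using p c s by (simp add: divide_simps)
  finally show ?thesis .
qed

lemma far_bound_d:
  fixes z :: complex and s c :: real
  assumes c: "c > 0" and s: "s \<ge> 0" and b: "cmod (1 - z * complex_of_real s) \<ge> c * (1 + s)"
  shows "cmod ((1 + complex_of_real s) * complex_of_real s / (1 - z * complex_of_real s)^2) \<le> 1 / c^2"
proof -
  have p: "c * (1 + s) > 0" using c s by simp
  have n1: "cmod (1 + complex_of_real s) = 1 + s"
    by (metis abs_of_nonneg norm_of_real of_real_1 of_real_add s add_nonneg_nonneg zero_le_one)
  have "cmod ((1 + complex_of_real s) * complex_of_real s / (1 - z * complex_of_real s)^2)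
      = (1+s) * s / (cmod (1 - z * complex_of_real s))^2"
    using s by (simp only: norm_divide norm_mult n1 norm_power norm_of_real abs_of_nonneg)
  also have "\<dots> \<le> (1+s) * s / (c * (1 + s))^2"
    by (rule divide_left_mono) (use p b s in \<open>auto intro!: power_mono mult_pos_pos\<close>)
  also have "\<dots> = (s / (1+s)) * (1 / c^2)"
  proof -
    have *: "u \<noteq> 0 \<Longrightarrow> c \<noteq> 0 \<Longrightarrow> u * s / (c * u)^2 = (s / u) * (1 / c^2)" for u :: real
      by (simp add: field_simps power2_eq_square)
    show ?thesis using *[of "1+s"] p c s by (simp add: mult.commute)
  qed
  also have "\<dots> \<le> 1 * (1 / c^2)" by (rule mult_right_mono) (use s in auto)
  finally show ?thesis by simp
qed

lemma far_err:
  fixes z z0 :: complex and s c :: real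
  assumes c: "c > 0" and s: "s \<ge> 0" and b: "cmod (1 - z * complex_of_real s) \<ge> c * (1 + s)"
    and b0: "cmod (1 - z0 * complex_of_real s) \<ge> c * (1 + s)"
  shows "cmod ((1 + complex_of_real s) / (1 - z * complex_of_real s)
           - (1 + complex_of_real s) / (1 - z0 * complex_of_real s)
           - (z - z0) * ((1 + complex_of_real s) * complex_of_real s / (1 - z0 * complex_of_real s)^2))
         \<le> (cmod (z - z0))^2 / c^3"
proof -
  have p: "c * (1 + s) > 0" using c s by simp
  define S where "S = complex_of_real s"
  define A where "A = 1 - z * S"
  define A0 where "A0 = 1 - z0 * S"
  have nA: "cmod A \<ge> c * (1 + s)" "cmod A0 \<ge> c * (1 + s)" using b b0 by (auto simp: A_def A0_def S_def)
  have A: "A \<noteq> 0" "A0 \<noteq> 0" using nA p by auto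
  have n1: "cmod (1 + S) = 1 + s"
    unfolding S_def by (metis abs_of_nonneg norm_of_real of_real_1 of_real_add s add_nonneg_nonneg zero_le_one)
  have nS: "cmod S = s" using s by (simp add: S_def)
  have d: "A0 - A = (z - z0) * S" by (simp add: A_def A0_def algebra_simps)
  have "(1 + S) / A - (1 + S) / A0 = (1 + S) * (A0 - A) / (A * A0)"
    using A by (simp add: field_simps)
  also have "\<dots> = (z - z0) * ((1 + S) * S / (A * A0))" using d by simp
  finally have e1: "(1 + S) / A - (1 + S) / A0 = (z - z0) * ((1 + S) * S / (A * A0))" .
  have "(1 + S) * S / (A * A0) - (1 + S) * S / A0^2 = (1 + S) * S * (A0 - A) / (A * A0^2)"
    using A by (simp add: field_simps power2_eq_square)
  also have "\<dots> = (z - z0) * ((1 + S) * S^2 / (A * A0^2))" using d by (simp add: power2_eq_square)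
  finally have e2: "(1 + S) * S / (A * A0) - (1 + S) * S / A0^2 = (z - z0) * ((1 + S) * S^2 / (A * A0^2))" .
  have eq: "(1 + S) / A - (1 + S) / A0 - (z - z0) * ((1 + S) * S / A0^2)
        = (z - z0)^2 * ((1 + S) * S^2 / (A * A0^2))"
  proof -
    have "(1 + S) / A - (1 + S) / A0 - (z - z0) * ((1 + S) * S / A0^2)
       = (z - z0) * ((1 + S) * S / (A * A0)) - (z - z0) * ((1 + S) * S / A0^2)" by (simp only: e1)
    also have "\<dots> = (z - z0) * ((1 + S) * S / (A * A0) - (1 + S) * S / A0^2)" by (simp only: right_diff_distrib)
    also have "\<dots> = (z - z0) * ((z - z0) * ((1 + S) * S^2 / (A * A0^2)))" by (simp only: e2)
    finally show ?thesis by (simp add: power2_eq_square)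
  qed
  have "cmod ((z - z0)^2 * ((1 + S) * S^2 / (A * A0^2)))
      = (cmod (z - z0))^2 * ((1 + s) * s^2 / (cmod A * (cmod A0)^2))"
    by (simp only: norm_divide norm_mult n1 norm_power nS)
  also have "\<dots> \<le> (cmod (z - z0))^2 * ((1 + s) * s^2 / ((c * (1 + s)) * (c * (1 + s))^2))"
    by (intro mult_left_mono divide_left_mono) (use p nA s in \<open>auto intro!: mult_mono power_mono mult_pos_pos\<close>)
  also have "\<dots> \<le> (cmod (z - z0))^2 * (1 / c^3)"
  proof (intro mult_left_mono)
    have "s^2 \<le> (1 + s)^2" by (rule power_mono) (use s in auto)
    hence "(1 + s) * s^2 \<le> (1 + s) * (1 + s)^2" by (intro mult_left_mono) (use s in auto)
    hence "(1 + s) * s^2 / ((c * (1 + s)) * (c * (1 + s))^2) \<le> (1 + s) * (1 + s)^2 / ((c * (1 + s)) * (c * (1 + s))^2)"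
      by (rule divide_right_mono) (use p in auto)
    also have "\<dots> = 1 / c^3"
    proof -
      have *: "u \<noteq> 0 \<Longrightarrow> c \<noteq> 0 \<Longrightarrow> u * u^2 / ((c * u) * (c * u)^2) = 1 / c^3" for u :: real
        by (simp add: field_simps power2_eq_square power3_eq_cube)
      show ?thesis using *[of "1+s"] p c s by simp
    qed
    finally show "(1 + s) * s^2 / ((c * (1 + s)) * (c * (1 + s))^2) \<le> 1 / c^3" .
  qed simp
  finally show ?thesis using eq unfolding A_def A0_def S_def by simp
qed

lemma far_holo:
  fixes G :: "real measure" and \<phi> :: "real \<Rightarrow> real" and U :: "complex set"
  assumes fm: "finite_measure G" and sG: "sets G = sets borel"
    and \<phi>m: "\<phi> \<in> borel_measurable borel" and \<phi>b: "\<forall>t. \<bar>\<phi> t\<bar> \<le> 1"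
    and c: "c > 0" and U: "open U"
    and bd: "\<forall>z\<in>U. \<forall>t. \<phi> t \<noteq> 0 \<longrightarrow> cmod (1 - z * complex_of_real (t\<^sup>2)) \<ge> c * (1 + t\<^sup>2)"
  shows "(\<lambda>z. integral\<^sup>L G (\<lambda>t. (1 + complex_of_real (t\<^sup>2)) / (1 - z * complex_of_real (t\<^sup>2)) * complex_of_real (\<phi> t))) holomorphic_on U"
proof -
  define f where "f z t = (1 + complex_of_real (t\<^sup>2)) / (1 - z * complex_of_real (t\<^sup>2)) * complex_of_real (\<phi> t)" for z t
  define d where "d z t = (1 + complex_of_real (t\<^sup>2)) * complex_of_real (t\<^sup>2) / (1 - z * complex_of_real (t\<^sup>2))^2 * complex_of_real (\<phi> t)" for z t
  define P where "P z = integral\<^sup>L G (f z)" for z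
  define K where "K = measure G (space G) / c^3"
  have mG: "h \<in> borel_measurable G" if "h \<in> borel_measurable borel" for h :: "real \<Rightarrow> complex"
    using that by (subst measurable_cong_sets[OF sG refl])
  have fmeas: "f z \<in> borel_measurable G" for z
    unfolding f_def by (rule mG, rule far_meas(1)[OF \<phi>m])
  have dmeas: "d z \<in> borel_measurable G" for z
    unfolding d_def by (rule mG, rule far_meas(2)[OF \<phi>m])
  have fint: "integrable G (f z)" if "z \<in> U" for z
  proof (rule bounded_integral_norm(1)[OF fm fmeas])
    fix t
    show "cmod (f z t) \<le> 1 / c"
    proof (cases "\<phi> t = 0")
      case True thus ?thesis using c by (simp add: f_def)
    next
      case False
      have "cmod (f z t) = cmod ((1 + complex_of_real (t\<^sup>2)) / (1 - z * complex_of_real (t\<^sup>2))) * \<bar>\<phi> t\<bar>"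
        by (simp only: f_def norm_mult norm_of_real)
      also have "\<dots> \<le> 1 / c * 1"
        by (intro mult_mono far_bound_f[OF c]) (use bd that False \<phi>b c in auto)
      finally show ?thesis by simp
    qed
  qed
  have dint: "integrable G (d z)" if "z \<in> U" for z
  proof (rule bounded_integral_norm(1)[OF fm dmeas])
    fix t
    show "cmod (d z t) \<le> 1 / c^2"
    proof (cases "\<phi> t = 0")
      case True thus ?thesis using c by (simp add: d_def)
    next
      case False
      have "cmod (d z t) = cmod ((1 + complex_of_real (t\<^sup>2)) * complex_of_real (t\<^sup>2) / (1 - z * complex_of_real (t\<^sup>2))^2) * \<bar>\<phi> t\<bar>"
        by (simp only: d_def norm_mult norm_of_real)
      also have "\<dots> \<le> 1 / c^2 * 1"
        by (intro mult_mono far_bound_d[OF c]) (use bd that False \<phi>b c in auto)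
      finally show ?thesis by simp
    qed
  qed
  have deriv: "(P has_field_derivative integral\<^sup>L G (d z0)) (at z0)" if z0: "z0 \<in> U" for z0
  proof -
    define D where "D = integral\<^sup>L G (d z0)"
    have err: "cmod (P z - P z0 - (z - z0) * D) \<le> cmod (z - z0) ^ 2 * K" if z: "z \<in> U" for z
    proof -
      have "P z - P z0 - (z - z0) * D = integral\<^sup>L G (\<lambda>t. f z t - f z0 t - (z - z0) * d z0 t)"
        unfolding P_def D_def using fint[OF z] fint[OF z0] dint[OF z0]
        by (simp add: Bochner_Integration.integral_diff)
      also have "cmod \<dots> \<le> cmod (z - z0) ^ 2 / c^3 * measure G (space G)"
      proof (rule bounded_integral_norm(2)[OF fm])
        show "(\<lambda>t. f z t - f z0 t - (z - z0) * d z0 t) \<in> borel_measurable G"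
          using fmeas dmeas by measurable
        fix t
        show "cmod (f z t - f z0 t - (z - z0) * d z0 t) \<le> cmod (z - z0) ^ 2 / c^3"
        proof (cases "\<phi> t = 0")
          case True thus ?thesis using c by (simp add: f_def d_def)
        next
          case False
          have "f z t - f z0 t - (z - z0) * d z0 t =
              ((1 + complex_of_real (t\<^sup>2)) / (1 - z * complex_of_real (t\<^sup>2))
           - (1 + complex_of_real (t\<^sup>2)) / (1 - z0 * complex_of_real (t\<^sup>2))
           - (z - z0) * ((1 + complex_of_real (t\<^sup>2)) * complex_of_real (t\<^sup>2) / (1 - z0 * complex_of_real (t\<^sup>2))^2))
             * complex_of_real (\<phi> t)"
            by (simp add: f_def d_def algebra_simps del: of_real_power)
          hence "cmod (f z t - f z0 t - (z - z0) * d z0 t) = cmod ((1 + complex_of_real (t\<^sup>2)) / (1 - z * complex_of_real (t\<^sup>2))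
           - (1 + complex_of_real (t\<^sup>2)) / (1 - z0 * complex_of_real (t\<^sup>2))
           - (z - z0) * ((1 + complex_of_real (t\<^sup>2)) * complex_of_real (t\<^sup>2) / (1 - z0 * complex_of_real (t\<^sup>2))^2)) * \<bar>\<phi> t\<bar>"
            by (simp only: norm_mult norm_of_real)
          also have "\<dots> \<le> cmod (z - z0) ^ 2 / c^3 * 1"
            by (intro mult_mono far_err[OF c]) (use bd that z0 False \<phi>b c in auto)
          finally show ?thesis by simp
        qed
      qed
      finally show ?thesis by (simp add: K_def)
    qed
    have "((\<lambda>z. (P z - P z0) / (z - z0) - D) \<longlongrightarrow> 0) (at z0)"
    proof (rule Lim_null_comparison)
      show "\<forall>\<^sub>F z in at z0. cmod ((P z - P z0) / (z - z0) - D) \<le> cmod (z - z0) * K"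
        using eventually_at_in_open[OF U z0]
      proof eventually_elim
        case (elim z)
        hence zz: "z \<in> U" "z \<noteq> z0" by auto
        have "(P z - P z0) / (z - z0) - D = (P z - P z0 - (z - z0) * D) / (z - z0)"
          using zz by (simp add: field_simps)
        hence "cmod ((P z - P z0) / (z - z0) - D) = cmod (P z - P z0 - (z - z0) * D) / cmod (z - z0)"
          by (simp add: norm_divide)
        also have "\<dots> \<le> cmod (z - z0) ^ 2 * K / cmod (z - z0)"
          by (rule divide_right_mono[OF err[OF zz(1)]]) simp
        also have "\<dots> = cmod (z - z0) * K" using zz by (simp add: power2_eq_square)
        finally show ?case .
      qed
      have "((\<lambda>z. cmod (z - z0) * K) \<longlongrightarrow> cmod (z0 - z0) * K) (at z0)"
        by (intro tendsto_intros)
      thus "((\<lambda>z. cmod (z - z0) * K) \<longlongrightarrow> 0) (at z0)" by simp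
    qed
    thus ?thesis unfolding has_field_derivative_iff D_def[symmetric] LIM_zero_iff .
  qed
  have "P holomorphic_on U"
    unfolding holomorphic_on_def
    using deriv field_differentiable_at_within field_differentiable_def by blast
  thus ?thesis unfolding P_def f_def .
qed

lemma seg_in_ball:
  fixes w t c :: complex
  assumes "w \<in> ball c r" "t \<in> ball c r" "0 \<le> u" "u \<le> 1"
  shows "w + complex_of_real u * (t - w) \<in> ball c r"
proof -
  have "(1 - u) *\<^sub>R w + u *\<^sub>R t \<in> ball c r"
    using convexD_alt[OF convex_ball assms(1,2) assms(3,4)] by (simp add: algebra_simps)
  moreover have "(1 - u) *\<^sub>R w + u *\<^sub>R t = w + complex_of_real u * (t - w)"
    by (simp add: scaleR_conv_of_real algebra_simps)
  ultimately show ?thesis by simp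
qed

lemma Q_holo:
  fixes p1 p2 :: "complex \<Rightarrow> complex" and t0 \<rho> a b :: real
  assumes d1: "\<And>\<zeta>. \<zeta> \<in> ball (of_real t0) \<rho> \<Longrightarrow> (p1 has_field_derivative p2 \<zeta>) (at \<zeta>)"
    and c2: "continuous_on (ball (of_real t0) \<rho>) p2"
    and ab: "\<And>t. t \<in> {a..b} \<Longrightarrow> complex_of_real t \<in> ball (of_real t0) \<rho>"
    and U: "U \<subseteq> ball (of_real t0) \<rho>" "convex U" "open U"
  shows "(\<lambda>w. integral (cbox a b) (\<lambda>t. - integral (cbox 0 1) (\<lambda>u. p1 (w + of_real u * (of_real t - w)))))
           holomorphic_on U"
proof -
  let ?D = "ball (complex_of_real t0) \<rho>"
  have c1: "continuous_on ?D p1"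
    using d1 by (meson DERIV_isCont continuous_at_imp_continuous_on)
  have inD: "w + of_real u * (of_real t - w) \<in> ?D" if "w \<in> U" "t \<in> {a..b}" "u \<in> {0..1}" for w t u
    using seg_in_ball[of w _ _ "of_real t" u] that U ab by auto
  have cont2: "continuous_on ((U \<times> {a..b}) \<times> {0..1})
      (\<lambda>((w,t),u). (1 - of_real u) * p2 (fst (w,t) + of_real u * (of_real (snd (w,t)) - fst (w,t))))"
  proof -
    have "continuous_on ((U \<times> {a..b}) \<times> {0..1}) (\<lambda>x. p2 (fst (fst x) + of_real (snd x) * (of_real (snd (fst x)) - fst (fst x))))"
      by (rule continuous_on_compose2[OF c2]) (auto intro!: continuous_intros inD)
    hence "continuous_on ((U \<times> {a..b}) \<times> {0..1}) (\<lambda>x. (1 - of_real (snd x)) * p2 (fst (fst x) + of_real (snd x) * (of_real (snd (fst x)) - fst (fst x))))"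
      by (intro continuous_intros)
    thus ?thesis by (simp add: case_prod_beta')
  qed
  have cont1: "continuous_on ((U \<times> {a..b}) \<times> {0..1})
      (\<lambda>((w,t),u). p1 (fst (w,t) + of_real u * (of_real (snd (w,t)) - fst (w,t))))"
  proof -
    have "continuous_on ((U \<times> {a..b}) \<times> {0..1}) (\<lambda>x. p1 (fst (fst x) + of_real (snd x) * (of_real (snd (fst x)) - fst (fst x))))"
      by (rule continuous_on_compose2[OF c1]) (auto intro!: continuous_intros inD)
    thus ?thesis by (simp add: case_prod_beta')
  qed
  define qd where "qd w t = - integral (cbox 0 1) (\<lambda>u. (1 - of_real u) * p2 (w + of_real u * (of_real t - w)))" for w t
  define q where "q w t = - integral (cbox 0 1) (\<lambda>u. p1 (w + of_real u * (of_real t - w)))" for w t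
  have qdc: "continuous_on (U \<times> cbox a b) (\<lambda>(w, t). qd w t)"
  proof -
    have "continuous_on (U \<times> {a..b}) (\<lambda>x. integral (cbox 0 1) (\<lambda>u. (1 - of_real u) * p2 (fst x + of_real u * (of_real (snd x) - fst x))))"
      by (rule integral_continuous_on_param) (use cont2 in \<open>simp add: case_prod_beta'\<close>)
    thus ?thesis unfolding qd_def by (simp add: case_prod_beta' continuous_on_minus)
  qed
  have qc: "continuous_on (U \<times> cbox a b) (\<lambda>(w, t). q w t)"
  proof -
    have "continuous_on (U \<times> {a..b}) (\<lambda>x. integral (cbox 0 1) (\<lambda>u. p1 (fst x + of_real u * (of_real (snd x) - fst x))))"
      by (rule integral_continuous_on_param) (use cont1 in \<open>simp add: case_prod_beta'\<close>)
    thus ?thesis unfolding q_def by (simp add: case_prod_beta' continuous_on_minus)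
  qed
  have qderiv: "((\<lambda>w. q w t) has_field_derivative qd w t) (at w within U)" if "w \<in> U" "t \<in> cbox a b" for w t
  proof -
    have "((\<lambda>w. integral (cbox 0 1) (\<lambda>u. p1 (w + of_real u * (of_real t - w)))) has_field_derivative
           integral (cbox 0 1) (\<lambda>u. (1 - of_real u) * p2 (w + of_real u * (of_real t - w)))) (at w within U)"
    proof (rule leibniz_rule_field_derivative[where fx="\<lambda>w u. (1 - of_real u) * p2 (w + of_real u * (of_real t - w))"])
      fix w' u assume w': "w' \<in> U" and u: "u \<in> cbox (0::real) 1"
      have "((\<lambda>w. w + of_real u * (of_real t - w)) has_field_derivative (1 - of_real u)) (at w' within U)"
        by (auto intro!: derivative_eq_intros)
      moreover have "(p1 has_field_derivative p2 (w' + of_real u * (of_real t - w'))) (at (w' + of_real u * (of_real t - w')))"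
        using d1 inD[of w' t u] w' u that by auto
      ultimately show "((\<lambda>w. p1 (w + of_real u * (of_real t - w))) has_field_derivative (1 - of_real u) * p2 (w' + of_real u * (of_real t - w'))) (at w' within U)"
        using DERIV_chain2 by (metis mult.commute)
    next
      fix w' assume w': "w' \<in> U"
      have "continuous_on (cbox 0 1) (\<lambda>u. p1 (w' + of_real u * (of_real t - w')))"
        by (rule continuous_on_compose2[OF c1]) (use inD w' that in \<open>auto intro!: continuous_intros\<close>)
      thus "(\<lambda>u. p1 (w' + of_real u * (of_real t - w'))) integrable_on cbox 0 1"
        by (rule integrable_continuous)
    next
      have "continuous_on (U \<times> cbox 0 1) (\<lambda>x. (1 - of_real (snd x)) * p2 (fst x + of_real (snd x) * (of_real t - fst x)))"
        by (intro continuous_intros continuous_on_compose2[OF c2]) (use inD that in \<open>auto intro!: continuous_intros\<close>)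
      thus "continuous_on (U \<times> cbox 0 1) (\<lambda>(x, u). (1 - of_real u) * p2 (x + of_real u * (of_real t - x)))"
        by (simp add: case_prod_beta')
    qed (use that U in auto)
    thus ?thesis unfolding q_def qd_def by (rule DERIV_minus)
  qed
  have "((\<lambda>w. integral (cbox a b) (q w)) has_field_derivative integral (cbox a b) (qd w)) (at w within U)" if "w \<in> U" for w
  proof (rule leibniz_rule_field_derivative[where fx=qd])
    fix w' assume w': "w' \<in> U"
    have "continuous_on (cbox a b) (q w')"
      using continuous_on_compose2[OF qc, of "cbox a b" "\<lambda>t. (w', t)"] w'
      by (auto intro!: continuous_intros simp: continuous_on_Pair continuous_on_const continuous_on_id)
    thus "q w' integrable_on cbox a b" by (rule integrable_continuous)
  qed (use that U qderiv qdc in auto)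
  hence "(\<lambda>w. integral (cbox a b) (q w)) holomorphic_on U"
    unfolding holomorphic_on_def field_differentiable_def by blast
  thus ?thesis unfolding q_def .
qed

lemma q_formula:
  fixes p p1 :: "complex \<Rightarrow> complex" and w t :: complex
  assumes d0: "\<And>\<zeta>. \<zeta> \<in> ball c r \<Longrightarrow> (p has_field_derivative p1 \<zeta>) (at \<zeta>)"
    and w: "w \<in> ball c r" and t: "t \<in> ball c r" and tw: "t \<noteq> w"
  shows "- integral (cbox 0 1) (\<lambda>u. p1 (w + of_real u * (t - w))) = (p t - p w) / (w - t)"
proof -
  have "((\<lambda>u. p1 (w + of_real u * (t - w)) * (t - w)) has_integral
          (p (w + of_real 1 * (t - w)) - p (w + of_real 0 * (t - w)))) {0..1}"
  proof (rule fundamental_theorem_of_calculus)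
    fix u :: real assume u: "u \<in> {0..1}"
    have "((\<lambda>\<zeta>. p (w + \<zeta> * (t - w))) has_field_derivative p1 (w + of_real u * (t - w)) * (t - w)) (at (of_real u))"
    proof -
      have "((\<lambda>\<zeta>. w + \<zeta> * (t - w)) has_field_derivative (t - w)) (at (of_real u))"
        by (auto intro!: derivative_eq_intros)
      moreover have "(p has_field_derivative p1 (w + of_real u * (t - w))) (at (w + of_real u * (t - w)))"
        using d0 seg_in_ball[OF w t, of u] u by auto
      ultimately show ?thesis
        using DERIV_chain2[of p "p1 (w + of_real u * (t - w))" "\<lambda>\<zeta>. w + \<zeta> * (t - w)" "of_real u" "t - w" UNIV] by simp
    qed
    thus "((\<lambda>u. p (w + of_real u * (t - w))) has_vector_derivative p1 (w + of_real u * (t - w)) * (t - w)) (at u within {0..1})"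
      by (rule has_vector_derivative_real_field)
  qed simp
  hence "((\<lambda>u. p1 (w + of_real u * (t - w)) * (t - w)) has_integral (p t - p w)) (cbox 0 1)" by simp
  hence "((\<lambda>u. (t - w) * p1 (w + of_real u * (t - w))) has_integral (p t - p w)) (cbox 0 1)"
    by (simp add: mult.commute)
  hence "((\<lambda>u. p1 (w + of_real u * (t - w))) has_integral (p t - p w) / (t - w)) (cbox 0 1)"
    using has_integral_mult_right_iff[of "t - w" "\<lambda>u. p1 (w + of_real u * (t - w))" "p t - p w" "cbox 0 1"] tw by simp
  hence "integral (cbox 0 1) (\<lambda>u. p1 (w + of_real u * (t - w))) = (p t - p w) / (t - w)"
    by (rule integral_unique)
  thus ?thesis using tw by (simp add: field_simps)
qed

lemma log_integral:
  fixes w :: complex and a b :: real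
  assumes w: "Im w < 0" and ab: "a \<le> b"
  shows "integral (cbox a b) (\<lambda>t. 1 / (w - of_real t)) = Ln (w - of_real a) + \<i> * pi - Ln (of_real b - w)"
proof -
  have nn: "of_real t - w \<notin> \<real>\<^sub>\<le>\<^sub>0" for t :: real
    using w by (auto simp: complex_nonpos_Reals_iff)
  have "((\<lambda>t. 1 / (w - of_real t)) has_integral ((- Ln (of_real b - w)) - (- Ln (of_real a - w)))) {a..b}"
  proof (rule fundamental_theorem_of_calculus[OF ab])
    fix t :: real assume "t \<in> {a..b}"
    have "((\<lambda>\<zeta>. - Ln (\<zeta> - w)) has_field_derivative 1 / (w - of_real t)) (at (of_real t))"
    proof -
      have "(Ln has_field_derivative inverse (of_real t - w)) (at (of_real t - w))"
        by (rule has_field_derivative_Ln[OF nn])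
      moreover have "((\<lambda>\<zeta>. \<zeta> - w) has_field_derivative 1) (at (of_real t))"
        by (auto intro!: derivative_eq_intros)
      ultimately have "((\<lambda>\<zeta>. Ln (\<zeta> - w)) has_field_derivative inverse (of_real t - w) * 1) (at (of_real t))"
        using DERIV_chain2[of Ln "inverse (of_real t - w)" "\<lambda>\<zeta>. \<zeta> - w" "of_real t" 1 UNIV] by simp
      hence "((\<lambda>\<zeta>. - Ln (\<zeta> - w)) has_field_derivative - (inverse (of_real t - w) * 1)) (at (of_real t))"
        by (rule DERIV_minus)
      moreover have "- (inverse (of_real t - w) * 1) = 1 / (w - of_real t)"
      proof -
        have "of_real t - w \<noteq> 0" "w - of_real t \<noteq> 0" using w by (auto simp: complex_eq_iff)
        thus ?thesis by (simp add: field_simps)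
      qed
      ultimately show ?thesis by simp
    qed
    thus "((\<lambda>t. - Ln (of_real t - w)) has_vector_derivative 1 / (w - of_real t)) (at t within {a..b})"
      by (rule has_vector_derivative_real_field)
  qed
  hence "integral (cbox a b) (\<lambda>t. 1 / (w - of_real t)) = Ln (of_real a - w) - Ln (of_real b - w)"
    by (simp add: integral_unique)
  also have "Ln (of_real a - w) = Ln (w - of_real a) + \<i> * pi"
  proof -
    have "w - of_real a \<noteq> 0" using w by auto
    from Ln_minus[OF this] show ?thesis using w by simp
  qed
  finally show ?thesis by simp
qed

lemma Im_integral_real:
  fixes f :: "real \<Rightarrow> complex"
  assumes "negligible N" "\<And>t. t \<in> S - N \<Longrightarrow> Im (f t) = 0"
  shows "Im (integral S f) = 0"
proof (cases "f integrable_on S")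
  case True
  have "Im (integral S f) = integral S (Im \<circ> f)"
    by (rule integral_linear[OF True bounded_linear_Im, symmetric])
  also have "\<dots> = integral S (\<lambda>_. 0)"
    by (rule integral_spike[OF assms(1)]) (use assms(2) in auto)
  finally show ?thesis by simp
qed (simp add: not_integrable_integral)

lemma R_holo:
  fixes p :: "complex \<Rightarrow> complex" and a b :: real
  assumes pc: "continuous_on {a..b} (\<lambda>t. p (of_real t))" and a: "0 \<le> a"
    and U: "U \<subseteq> {w. Re w > 0}" "convex U" "open U"
  shows "(\<lambda>w. integral (cbox a b) (\<lambda>t. p (of_real t) / (w + of_real t))) holomorphic_on U"
proof -
  have nz: "w + of_real t \<noteq> 0" if "w \<in> U" "t \<in> {a..b}" for w t
  proof -
    have "Re (w + of_real t) > 0" using that U a by auto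
    thus ?thesis by (metis less_irrefl zero_complex.sel(1))
  qed
  have "((\<lambda>w. integral (cbox a b) (\<lambda>t. p (of_real t) / (w + of_real t))) has_field_derivative
        integral (cbox a b) (\<lambda>t. - p (of_real t) / (w + of_real t)^2)) (at w within U)" if w: "w \<in> U" for w
  proof (rule leibniz_rule_field_derivative)
    fix w' t assume w': "w' \<in> U" and t: "t \<in> cbox a b"
    show "((\<lambda>w. p (of_real t) / (w + of_real t)) has_field_derivative - p (of_real t) / (w' + of_real t)^2) (at w' within U)"
      using nz[OF w'] t by (auto intro!: derivative_eq_intros simp: power2_eq_square field_simps)
  next
    fix w' assume w': "w' \<in> U"
    have "continuous_on {a..b} (\<lambda>t. p (of_real t) / (w' + of_real t))"
      by (intro continuous_intros pc) (use nz w' in auto)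
    thus "(\<lambda>t. p (of_real t) / (w' + of_real t)) integrable_on cbox a b"
      by (simp add: integrable_continuous_real)
  next
    have "continuous_on (U \<times> {a..b}) (\<lambda>x. - p (of_real (snd x)) / (fst x + of_real (snd x))^2)"
      by (intro continuous_intros continuous_on_compose2[OF pc]) (use nz in auto)
    thus "continuous_on (U \<times> cbox a b) (\<lambda>(w, t). - p (of_real t) / (w + of_real t)^2)"
      by (simp add: case_prod_beta')
  qed (use w U in auto)
  thus ?thesis unfolding holomorphic_on_def field_differentiable_def by blast
qed

lemma L_holo:
  fixes a b :: real
  assumes U: "U \<subseteq> {w. a < Re w \<and> Re w < b}"
  shows "(\<lambda>w. Ln (w - of_real a) + \<i> * pi - Ln (of_real b - w)) holomorphic_on U"
proof -
  have 1: "w - of_real a \<notin> \<real>\<^sub>\<le>\<^sub>0" if "w \<in> U" for w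
    using U that by (auto simp: complex_nonpos_Reals_iff)
  have 2: "of_real b - w \<notin> \<real>\<^sub>\<le>\<^sub>0" if "w \<in> U" for w
    using U that by (auto simp: complex_nonpos_Reals_iff)
  show ?thesis by (intro holomorphic_intros) (use 1 2 in auto)
qed

lemma S_decomp:
  fixes p p1 :: "complex \<Rightarrow> complex" and a b :: real and w :: complex
  assumes d0: "\<And>\<zeta>. \<zeta> \<in> ball c r \<Longrightarrow> (p has_field_derivative p1 \<zeta>) (at \<zeta>)"
    and ab: "\<And>t. t \<in> {a..b} \<Longrightarrow> complex_of_real t \<in> ball c r" and a_b: "a \<le> b"
    and w: "w \<in> ball c r" "Im w < 0"
  shows "integral (cbox a b) (\<lambda>t. p (of_real t) / (w - of_real t)) =
         integral (cbox a b) (\<lambda>t. - integral (cbox 0 1) (\<lambda>u. p1 (w + of_real u * (of_real t - w))))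
         + p w * (Ln (w - of_real a) + \<i> * pi - Ln (of_real b - w))"
proof -
  have pc: "continuous_on (ball c r) p"
    using d0 by (meson DERIV_isCont continuous_at_imp_continuous_on)
  have pc': "continuous_on {a..b} (\<lambda>t. p (of_real t))"
    by (rule continuous_on_compose2[OF pc]) (use ab in \<open>auto intro!: continuous_intros\<close>)
  have nz: "w - of_real t \<noteq> 0" for t :: real using w by (auto simp: complex_eq_iff)
  have nz': "w \<noteq> of_real t" for t :: real using w by (auto simp: complex_eq_iff)
  have i1: "(\<lambda>t. (p (of_real t) - p w) / (w - of_real t)) integrable_on cbox a b"
    by (auto intro!: integrable_continuous_real continuous_intros pc' simp: nz nz')
  have i2: "(\<lambda>t. 1 / (w - of_real t)) integrable_on cbox a b"
    by (auto intro!: integrable_continuous_real continuous_intros simp: nz nz')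
  have "integral (cbox a b) (\<lambda>t. p (of_real t) / (w - of_real t)) =
        integral (cbox a b) (\<lambda>t. (p (of_real t) - p w) / (w - of_real t) + p w * (1 / (w - of_real t)))"
    by (rule integral_cong) (simp add: nz add_divide_distrib[symmetric] diff_divide_distrib)
  also have "\<dots> = integral (cbox a b) (\<lambda>t. (p (of_real t) - p w) / (w - of_real t)) +
                   p w * integral (cbox a b) (\<lambda>t. 1 / (w - of_real t))"
    by (simp only: integral_add[OF i1 integrable_on_mult_right[OF i2, of "p w"]] integral_mult_right)
  also have "integral (cbox a b) (\<lambda>t. (p (of_real t) - p w) / (w - of_real t)) =
     integral (cbox a b) (\<lambda>t. - integral (cbox 0 1) (\<lambda>u. p1 (w + of_real u * (of_real t - w))))"
  proof (rule integral_cong)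
    fix t assume "t \<in> cbox a b"
    hence "of_real t \<in> ball c r" using ab by auto
    from q_formula[OF d0 w(1) this] nz[of t]
    show "(p (of_real t) - p w) / (w - of_real t) = - integral (cbox 0 1) (\<lambda>u. p1 (w + of_real u * (of_real t - w)))"
      by auto
  qed
  also have "integral (cbox a b) (\<lambda>t. 1 / (w - of_real t)) = Ln (w - of_real a) + \<i> * pi - Ln (of_real b - w)"
    by (rule log_integral[OF w(2) a_b])
  finally show ?thesis .
qed

lemma far_real_bound:
  fixes x a b s :: real
  assumes x: "x > 0" and xa: "x * a^2 < 1" and xb: "x * b^2 > 1" and a: "a \<ge> 0"
    and s: "s \<ge> 0" and sab: "s < a^2 \<or> s > b^2"
  shows "\<bar>1 - x * s\<bar> \<ge> min ((1 - x * a^2) / (1 + a^2)) ((x * b^2 - 1) / (1 + b^2)) * (1 + s)"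
proof (cases "s < a^2")
  case True
  have "(1 - x * a^2) / (1 + a^2) * (1 + s) \<le> 1 - x * s"
  proof -
    have "(1 - x * a^2) * (1 + s) \<le> (1 - x * s) * (1 + a^2)"
    proof -
      have "(1 - x * s) * (1 + a^2) - (1 - x * a^2) * (1 + s) = (a^2 - s) * (1 + x)"
        by (simp add: algebra_simps)
      moreover have "(a^2 - s) * (1 + x) \<ge> 0" using True x by auto
      ultimately show ?thesis by linarith
    qed
    moreover have "(1 - x * a^2) / (1 + a^2) * (1 + s) = (1 - x * a^2) * (1 + s) / (1 + a^2)" by simp
    moreover have "(1 + a^2) > 0" by (simp add: add_pos_nonneg)
    ultimately show ?thesis by (simp add: pos_divide_le_eq)
  qed
  moreover have "min ((1 - x * a^2) / (1 + a^2)) ((x * b^2 - 1) / (1 + b^2)) * (1 + s) \<le> (1 - x * a^2) / (1 + a^2) * (1 + s)"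
    using s by (intro mult_right_mono) auto
  ultimately show ?thesis by linarith
next
  case False
  hence sb: "s > b^2" using sab by auto
  have "(x * b^2 - 1) / (1 + b^2) * (1 + s) \<le> x * s - 1"
  proof -
    have "(x * b^2 - 1) * (1 + s) \<le> (x * s - 1) * (1 + b^2)"
    proof -
      have "(x * s - 1) * (1 + b^2) - (x * b^2 - 1) * (1 + s) = (s - b^2) * (1 + x)"
        by (simp add: algebra_simps)
      moreover have "(s - b^2) * (1 + x) \<ge> 0" using sb x by auto
      ultimately show ?thesis by linarith
    qed
    moreover have "(x * b^2 - 1) / (1 + b^2) * (1 + s) = (x * b^2 - 1) * (1 + s) / (1 + b^2)" by simp
    moreover have "(1 + b^2) > 0" by (simp add: add_pos_nonneg)
    ultimately show ?thesis by (simp add: pos_divide_le_eq)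
  qed
  moreover have "min ((1 - x * a^2) / (1 + a^2)) ((x * b^2 - 1) / (1 + b^2)) * (1 + s) \<le> (x * b^2 - 1) / (1 + b^2) * (1 + s)"
    using s by (intro mult_right_mono) auto
  ultimately show ?thesis by linarith
qed

lemma far_complex_bound:
  fixes z :: complex and x s dd r :: real
  assumes base: "\<bar>1 - x * s\<bar> \<ge> dd * (1 + s)" and s: "s \<ge> 0"
    and z: "cmod (z - of_real x) < r" and r: "r \<le> dd / 2" and dd: "dd \<ge> 0"
  shows "cmod (1 - z * of_real s) \<ge> dd / 2 * (1 + s)"
proof -
  have "1 - z * of_real s = of_real (1 - x * s) - (z - of_real x) * of_real s"
    by (simp add: algebra_simps)
  hence 1: "cmod (1 - z * of_real s) \<ge> cmod (of_real (1 - x * s) :: complex) - cmod ((z - of_real x) * of_real s)"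
    by (metis norm_triangle_ineq2)
  have 2: "cmod ((z - of_real x) * of_real s) = cmod (z - of_real x) * s"
    using s by (simp add: norm_mult)
  have 3: "cmod (z - of_real x) * s \<le> dd / 2 * s"
    using z r s by (intro mult_right_mono) auto
  have 4: "cmod (of_real (1 - x * s) :: complex) = \<bar>1 - x * s\<bar>" by (rule norm_of_real)
  have 5: "dd / 2 * (1 + s) = dd / 2 + dd / 2 * s" by (simp add: algebra_simps)
  have 6: "dd * (1 + s) = dd + dd * s" by (simp add: algebra_simps)
  show ?thesis using 1 2 3 4 5 6 base s dd by linarith
qed

lemma pf_identity:
  fixes z w T P :: complex
  assumes zw: "z * w^2 = 1" and n: "w - T \<noteq> 0" "w + T \<noteq> 0" "z \<noteq> 0" "w \<noteq> 0"
  shows "P / (1 - z * T^2) = (P / (w - T) + P / (w + T)) / (2 * z * w)"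
proof -
  have e: "1 - z * T^2 = z * ((w - T) * (w + T))"
    using zw by (simp add: algebra_simps power2_eq_square)
  have "(P / (w - T) + P / (w + T)) / (2 * z * w) = P * (2 * w) / ((w - T) * (w + T) * (2 * z * w))"
    using n by (simp add: field_simps)
  also have "\<dots> = P * (2 * w) / ((z * ((w - T) * (w + T))) * (2 * w))"
    by (simp add: algebra_simps)
  also have "\<dots> = P / (z * ((w - T) * (w + T)))"
    using n by simp
  finally show ?thesis using e by simp
qed

lemma Im_csqrt_pos:
  fixes z :: complex
  assumes "Im z > 0"
  shows "Im (csqrt z) > 0" "Im (1 / csqrt z) < 0"
proof -
  have "Re z < cmod z"
  proof -
    have "Re z \<le> \<bar>Re z\<bar>" by simp
    also have "\<bar>Re z\<bar> = sqrt ((Re z)^2)" by simp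
    also have "sqrt ((Re z)^2) < sqrt ((Re z)^2 + (Im z)^2)" using assms by (intro real_sqrt_less_mono) simp
    also have "\<dots> = cmod z" by (simp add: cmod_def)
    finally show ?thesis .
  qed
  thus i: "Im (csqrt z) > 0" using assms by simp
  have gen: "Im (1 / u) < 0" if "Im u > 0" for u :: complex
  proof -
    have "Im (1 / u) = - Im u / ((Re u)^2 + (Im u)^2)"
      unfolding inverse_eq_divide[symmetric] by (rule inverse_complex.sel(2))
    moreover have "(Re u)^2 + (Im u)^2 > 0" using that by (simp add: add_nonneg_pos)
    ultimately show ?thesis using that by (simp add: divide_neg_pos)
  qed
  show "Im (1 / csqrt z) < 0" by (rule gen[OF i])
qed

theorem mainTheorem17:
  fixes lam :: real and G :: "real measure" and C :: "complex \<Rightarrow> complex"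
  assumes lam: "0 < lam" "lam < 1"
    and symG: "symmetric_finite_measure G"
    and nonzero: "emeasure G UNIV \<noteq> 0"
    and dens: "\<exists>g. (\<forall>A\<in>sets borel. emeasure G (A \<inter> {0<..}) =
                        (\<integral>\<^sup>+ x. indicator (A \<inter> {0<..}) x * ennreal (g x) \<partial>lborel))
                 \<and> (\<forall>x>0. g x > 0) \<and> real_analytic_on g {0<..}"
    and C_levy: "\<forall>z\<in>slit_plane. C z = levy_R G z"
  shows "\<forall>x::real. x > 0 \<longrightarrow>
           (\<exists>r>0. \<exists>F. F holomorphic_on ball (complex_of_real x) r
                  \<and> (\<forall>z\<in>ball (complex_of_real x) r. Im z > 0 \<longrightarrow> F z = C z)
                  \<and> Im (F (complex_of_real x)) > 0)"
proof (intro allI impI)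
  fix x :: real assume x: "x > 0"
  obtain g where densG: "\<forall>A\<in>sets borel. emeasure G (A \<inter> {0<..}) =
                        (\<integral>\<^sup>+ x. indicator (A \<inter> {0<..}) x * ennreal (g x) \<partial>lborel)"
     and gpos: "\<forall>x>0. g x > 0" and ana: "real_analytic_on g {0<..}" using dens by blast
  have sG: "sets G = sets borel" and fmG: "finite_measure G" using symG by (auto simp: symmetric_finite_measure_def)
  define t0 where "t0 = 1 / sqrt x"
  have t0: "t0 > 0" using x by (simp add: t0_def)
  have t0sq: "x * t0^2 = 1" using x by (simp add: t0_def power_divide)
  obtain \<rho> c where rho: "\<rho> > 0" and csums: "\<forall>y. \<bar>y - t0\<bar> < \<rho> \<longrightarrow> (\<lambda>n. c n * (y - t0)^n) sums g y"
    using ana t0 unfolding real_analytic_on_def by (meson greaterThan_iff)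
  define \<delta> where "\<delta> = min \<rho> t0 / 2"
  have \<delta>: "\<delta> > 0" "\<delta> < \<rho>" "\<delta> < t0" using rho t0 by (auto simp: \<delta>_def)
  define a where "a = t0 - \<delta>"
  define b where "b = t0 + \<delta>"
  have ab: "0 < a" "a < t0" "t0 < b" "a \<le> b" using \<delta> by (auto simp: a_def b_def)
  define cc where "cc = (\<lambda>n. complex_of_real (c n))"
  define GG where "GG k \<zeta> = (\<Sum>n. ((diffs^^k) cc) n * (\<zeta> - complex_of_real t0)^n)" for k \<zeta>
  let ?D = "ball (complex_of_real t0) \<rho>"
  have GGd: "(GG k has_field_derivative GG (Suc k) \<zeta>) (at \<zeta>)" if "\<zeta> \<in> ?D" for k \<zeta>
  proof -
    have "norm (\<zeta> - complex_of_real t0) < \<rho>" using that by (simp add: dist_norm norm_minus_commute)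
    from powser_ext_deriv[OF rho csums this, of k] show ?thesis
      unfolding GG_def cc_def by (simp add: fun_eq_iff)
  qed
  have GGreal: "GG 0 (of_real t) = of_real (g t)" if "\<bar>t - t0\<bar> < \<rho>" for t
  proof -
    have "(\<lambda>n. complex_of_real (c n * (t - t0)^n)) sums complex_of_real (g t)"
      using csums that by (intro sums_of_real) auto
    hence "(\<lambda>n. cc n * (complex_of_real t - complex_of_real t0)^n) sums complex_of_real (g t)"
      by (simp add: cc_def)
    thus ?thesis unfolding GG_def by (simp add: sums_iff)
  qed
  have GGc: "continuous_on ?D (GG k)" for k
    using GGd by (meson DERIV_isCont continuous_at_imp_continuous_on)
  define p where "p \<zeta> = (1 + \<zeta>^2) * GG 0 \<zeta>" for \<zeta>
  define p1 where "p1 \<zeta> = 2 * \<zeta> * GG 0 \<zeta> + (1 + \<zeta>^2) * GG (Suc 0) \<zeta>" for \<zeta>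
  define p2 where "p2 \<zeta> = 2 * GG 0 \<zeta> + 4 * \<zeta> * GG (Suc 0) \<zeta> + (1 + \<zeta>^2) * GG (Suc (Suc 0)) \<zeta>" for \<zeta>
  have dA: "((\<lambda>\<zeta>. 1 + \<zeta>^2) has_field_derivative 2 * \<zeta>) (at \<zeta>)" for \<zeta> :: complex
    by (auto intro!: derivative_eq_intros)
  have dA2: "((\<lambda>\<zeta>. 2 * \<zeta>) has_field_derivative 2) (at \<zeta>)" for \<zeta> :: complex
    by (auto intro!: derivative_eq_intros)
  have d0: "(p has_field_derivative p1 \<zeta>) (at \<zeta>)" if "\<zeta> \<in> ?D" for \<zeta>
    unfolding p_def p1_def
    by (rule DERIV_cong[OF DERIV_mult'[OF dA GGd[OF that, of 0]]]) (simp add: algebra_simps)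
  have d1: "(p1 has_field_derivative p2 \<zeta>) (at \<zeta>)" if "\<zeta> \<in> ?D" for \<zeta>
    unfolding p1_def p2_def
    by (rule DERIV_cong[OF DERIV_add[OF DERIV_mult'[OF dA2 GGd[OF that, of 0]] DERIV_mult'[OF dA GGd[OF that, of "Suc 0"]]]])
       (simp add: algebra_simps)
  have c2: "continuous_on ?D p2"
    unfolding p2_def
    by (intro continuous_on_add continuous_on_mult continuous_on_const continuous_on_id continuous_on_power GGc)
  have pholo: "p holomorphic_on ?D"
    using d0 unfolding holomorphic_on_def field_differentiable_def
    by (meson has_field_derivative_at_within)
  have abD: "complex_of_real t \<in> ?D" if "t \<in> {a..b}" for t
  proof -
    have "\<bar>t - t0\<bar> \<le> \<delta>" using that by (auto simp: a_def b_def)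
    thus ?thesis using \<delta> by (simp add: dist_norm norm_minus_commute flip: of_real_diff)
  qed
  have preal: "p (of_real t) = of_real ((1 + t^2) * g t)" if "t \<in> {a..b}" for t
  proof -
    have "\<bar>t - t0\<bar> < \<rho>" using that \<delta> by (auto simp: a_def b_def)
    thus ?thesis using GGreal by (simp add: p_def)
  qed
  have gc: "continuous_on {a..b} g"
  proof -
    have "continuous_on {a..b} (\<lambda>t. GG 0 (of_real t))"
      by (rule continuous_on_compose2[OF GGc[of 0]]) (auto intro!: continuous_intros abD)
    hence "continuous_on {a..b} (\<lambda>t. Re (GG 0 (of_real t)))"
      by (rule continuous_on_Re)
    moreover have "Re (GG 0 (of_real t)) = g t" if "t \<in> {a..b}" for t
    proof -
      have "\<bar>t - t0\<bar> < \<rho>" using that \<delta> by (auto simp: a_def b_def)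
      thus ?thesis using GGreal by simp
    qed
    ultimately show ?thesis by (rule continuous_on_eq)
  qed
  have gpos': "\<forall>t\<in>{a..b}. g t \<ge> 0" using gpos ab by (auto intro: less_imp_le)
  define W where "W z = 1 / csqrt z" for z :: complex
  have Wx: "W (of_real x) = of_real t0" using x by (simp add: W_def t0_def csqrt_of_real)
  have Wcont: "continuous (at (of_real x)) W"
  proof -
    have nn: "complex_of_real x \<notin> \<real>\<^sub>\<le>\<^sub>0" using x by (auto simp: complex_nonpos_Reals_iff)
    have "csqrt (of_real x) \<noteq> 0" using x by simp
    thus ?thesis unfolding W_def
      by (intro continuous_divide continuous_const continuous_at_csqrt[OF nn]) simp
  qed
  obtain r1 where r1: "r1 > 0" "\<forall>z. dist z (of_real x) < r1 \<longrightarrow> dist (W z) (of_real t0) < \<delta> / 2"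
  proof -
    have "\<delta> / 2 > 0" using \<delta> by simp
    with Wcont show ?thesis unfolding continuous_at_eps_delta Wx using that by blast
  qed
  have xa: "x * a^2 < 1"
  proof -
    have "a^2 < t0^2" using ab by (intro power_strict_mono) auto
    hence "x * a^2 < x * t0^2" using x by (rule mult_strict_left_mono)
    thus ?thesis using t0sq by simp
  qed
  have xb: "x * b^2 > 1"
  proof -
    have "t0^2 < b^2" using ab t0 by (intro power_strict_mono) auto
    hence "x * t0^2 < x * b^2" using x by (rule mult_strict_left_mono)
    thus ?thesis using t0sq by simp
  qed
  define dd where "dd = min ((1 - x * a^2) / (1 + a^2)) ((x * b^2 - 1) / (1 + b^2))"
  have dd: "dd > 0" using xa xb by (auto simp: dd_def add_pos_nonneg)
  define r where "r = min r1 (min (x / 2) (dd / 2))"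
  have r: "r > 0" "r \<le> r1" "r \<le> x / 2" "r \<le> dd / 2" using r1 x dd by (auto simp: r_def)
  let ?B = "ball (complex_of_real x) r"
  define V where "V = ball (complex_of_real t0) (\<delta> / 2)"
  have Bprops: "Re z > 0" "z \<noteq> 0" "z \<notin> \<real>\<^sub>\<le>\<^sub>0" "W z \<in> V" "W z \<noteq> 0" if "z \<in> ?B" for z
  proof -
    have dz: "cmod (z - of_real x) < r" using that by (simp add: dist_norm norm_minus_commute)
    have "\<bar>Re z - x\<bar> \<le> cmod (z - of_real x)" using abs_Re_le_cmod[of "z - of_real x"] by simp
    thus "Re z > 0" using dz r by linarith
    thus "z \<noteq> 0" "z \<notin> \<real>\<^sub>\<le>\<^sub>0" by (auto simp: complex_nonpos_Reals_iff)
    have "dist z (of_real x) < r1" using dz r by (simp add: dist_norm)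
    hence "dist (W z) (of_real t0) < \<delta> / 2" using r1 by blast
    thus "W z \<in> V" by (simp add: V_def dist_commute)
    show "W z \<noteq> 0" using \<open>z \<noteq> 0\<close> by (simp add: W_def)
  qed
  have VD: "V \<subseteq> ?D" using \<delta> by (simp add: V_def subset_ball)
  have Vre: "V \<subseteq> {w. Re w > 0}" "V \<subseteq> {w. a < Re w \<and> Re w < b}"
  proof -
    have "\<bar>Re w - t0\<bar> < \<delta> / 2" if "w \<in> V" for w
    proof -
      have "\<bar>Re (w - of_real t0)\<bar> \<le> cmod (w - of_real t0)" by (rule abs_Re_le_cmod)
      moreover have "cmod (w - of_real t0) < \<delta> / 2" using that by (simp add: V_def dist_norm norm_minus_commute)
      ultimately show ?thesis by simp
    qed
    have "\<delta> / 2 < \<delta>" using \<delta> by simp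
    thus "V \<subseteq> {w. Re w > 0}" "V \<subseteq> {w. a < Re w \<and> Re w < b}"
      using \<open>\<And>w. w \<in> V \<Longrightarrow> \<bar>Re w - t0\<bar> < \<delta> / 2\<close> \<delta>(3) unfolding a_def b_def
      by (smt (verit) mem_Collect_eq subsetI)+
  qed
  define \<phi> where "\<phi> t = (1 - indicator {a..b} t - indicator {-b..-a} t :: real)" for t :: real
  have \<phi>m: "\<phi> \<in> borel_measurable borel" unfolding \<phi>_def by measurable
  have \<phi>b: "\<forall>t. \<bar>\<phi> t\<bar> \<le> 1" using ab by (auto simp: \<phi>_def split: split_indicator)
  have \<phi>01: "\<phi> t \<noteq> 0 \<Longrightarrow> t\<^sup>2 < a\<^sup>2 \<or> t\<^sup>2 > b\<^sup>2" for t
  proof -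
    assume "\<phi> t \<noteq> 0"
    hence nin: "t \<notin> {a..b}" "t \<notin> {-b..-a}" using ab by (auto simp: \<phi>_def split: split_indicator)
    show ?thesis
    proof (cases "\<bar>t\<bar> < a")
      case True
      hence "\<bar>t\<bar>^2 < a^2" by (intro power_strict_mono) auto
      thus ?thesis by simp
    next
      case False
      hence "\<bar>t\<bar> > b" using nin by (auto simp: abs_if)
      hence "b^2 < \<bar>t\<bar>^2" using ab by (intro power_strict_mono) auto
      thus ?thesis by simp
    qed
  qed
  have farbd: "\<forall>z\<in>?B. \<forall>t. \<phi> t \<noteq> 0 \<longrightarrow> cmod (1 - z * complex_of_real (t\<^sup>2)) \<ge> dd / 2 * (1 + t\<^sup>2)"
  proof (intro ballI allI impI)
    fix z t assume z: "z \<in> ?B" and pt: "\<phi> t \<noteq> 0"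
    have base: "\<bar>1 - x * t\<^sup>2\<bar> \<ge> dd * (1 + t\<^sup>2)"
      unfolding dd_def by (rule far_real_bound[OF x xa xb _ _ \<phi>01[OF pt]]) (use ab in auto)
    show "cmod (1 - z * complex_of_real (t\<^sup>2)) \<ge> dd / 2 * (1 + t\<^sup>2)"
      by (rule far_complex_bound[OF base]) (use z r dd in \<open>auto simp: dist_norm norm_minus_commute\<close>)
  qed
  define P where "P z = integral\<^sup>L G (\<lambda>t. (1 + complex_of_real (t\<^sup>2)) / (1 - z * complex_of_real (t\<^sup>2)) * complex_of_real (\<phi> t))" for z
  have Pholo: "P holomorphic_on ?B"
    unfolding P_def by (rule far_holo[OF fmG sG \<phi>m \<phi>b _ open_ball farbd]) (use dd in simp)
  define NQ where "NQ w = integral (cbox a b) (\<lambda>t. - integral (cbox 0 1) (\<lambda>u. p1 (w + of_real u * (of_real t - w))))" for w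
  define NL where "NL w = Ln (w - of_real a) + \<i> * pi - Ln (of_real b - w)" for w
  define NR where "NR w = integral (cbox a b) (\<lambda>t. p (of_real t) / (w + of_real t))" for w
  have pc': "continuous_on {a..b} (\<lambda>t. p (of_real t))"
    by (rule continuous_on_compose2[OF holomorphic_on_imp_continuous_on[OF pholo]]) (auto intro!: continuous_intros abD)
  have NQh: "NQ holomorphic_on V"
    unfolding NQ_def by (rule Q_holo[OF d1 c2 abD VD]) (auto simp: V_def)
  have NLh: "NL holomorphic_on V"
    unfolding NL_def by (rule L_holo[OF Vre(2)])
  have NRh: "NR holomorphic_on V"
    unfolding NR_def by (rule R_holo[OF pc' _ Vre(1)]) (use ab in \<open>auto simp: V_def\<close>)
  have Wh: "W holomorphic_on ?B"
    unfolding W_def by (intro holomorphic_intros) (use Bprops in auto)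
  have WB: "W ` ?B \<subseteq> V" using Bprops by auto
  have comp: "(\<lambda>z. h (W z)) holomorphic_on ?B" if "h holomorphic_on V" for h
    using holomorphic_on_compose_gen[OF Wh that WB] by (simp add: o_def)
  have pV: "p holomorphic_on V" using pholo VD by (rule holomorphic_on_subset)
  define E where "E z = (NQ (W z) + p (W z) * NL (W z) + NR (W z)) / (2 * z * W z)" for z
  define F where "F z = z * (P z + 2 * E z)" for z
  have Fholo: "F holomorphic_on ?B"
  proof -
    have "E holomorphic_on ?B"
      unfolding E_def
      by (intro holomorphic_intros comp NQh NLh NRh pV Wh) (use Bprops in auto)
    thus ?thesis unfolding F_def by (intro holomorphic_intros Pholo)
  qed
  have agree: "F z = C z" if z: "z \<in> ?B" "Im z > 0" for z
  proof -
    have slit: "z \<in> slit_plane" using z(2) by (simp add: slit_plane_def)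
    define fz where "fz t = (1 + complex_of_real (t\<^sup>2)) / (1 - z * complex_of_real (t\<^sup>2))" for t
    have lowb: "cmod (1 - z * complex_of_real (t\<^sup>2)) \<ge> Im z * t\<^sup>2" for t
    proof -
      have "\<bar>Im (1 - z * complex_of_real (t\<^sup>2))\<bar> \<le> cmod (1 - z * complex_of_real (t\<^sup>2))" by (rule abs_Im_le_cmod)
      moreover have "Im (1 - z * complex_of_real (t\<^sup>2)) = - (Im z * t\<^sup>2)" by simp
      ultimately show ?thesis by simp
    qed
    have nz: "1 - z * complex_of_real (t\<^sup>2) \<noteq> 0" if "t \<noteq> 0" for t
    proof -
      have "Im z * t\<^sup>2 > 0" using z(2) that by simp
      thus ?thesis using lowb[of t] by auto
    qed
    have near_in: "t \<noteq> 0 \<and> t\<^sup>2 \<ge> a\<^sup>2 \<and> t\<^sup>2 \<le> b\<^sup>2" if "t \<in> {a..b} \<union> {-b..-a}" for t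
    proof -
      have "a \<le> \<bar>t\<bar>" "\<bar>t\<bar> \<le> b" using that ab by auto
      hence "a^2 \<le> \<bar>t\<bar>^2" "\<bar>t\<bar>^2 \<le> b^2" using ab by (intro power_mono; simp)+
      thus ?thesis using \<open>a \<le> \<bar>t\<bar>\<close> ab by auto
    qed
    have fzc: "continuous_on S fz" if "S \<subseteq> {a..b} \<union> {-b..-a}" for S
      unfolding fz_def by (intro continuous_intros) (use near_in nz that in \<open>auto simp del: of_real_power\<close>)
    define NB where "NB = (1 + b\<^sup>2) / (Im z * a\<^sup>2)"
    have NB0: "NB \<ge> 0" using z(2) by (simp add: NB_def add_pos_nonneg less_imp_le)
    have fzb: "cmod (fz t) \<le> NB" if "t \<in> {a..b} \<union> {-b..-a}" for t
    proof -
      have ni: "t \<noteq> 0" "t\<^sup>2 \<ge> a\<^sup>2" "t\<^sup>2 \<le> b\<^sup>2" using near_in[OF that] by auto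
      have n1: "cmod (1 + complex_of_real (t\<^sup>2)) = 1 + t\<^sup>2"
        by (metis abs_of_nonneg norm_of_real of_real_1 of_real_add zero_le_power2 add_nonneg_nonneg zero_le_one)
      have "cmod (fz t) = (1 + t\<^sup>2) / cmod (1 - z * complex_of_real (t\<^sup>2))"
        by (simp only: fz_def norm_divide n1)
      also have "\<dots> \<le> (1 + b\<^sup>2) / (Im z * a\<^sup>2)"
      proof (rule frac_le)
        show "Im z * a\<^sup>2 \<le> cmod (1 - z * complex_of_real (t\<^sup>2))"
          using lowb[of t] mult_left_mono[OF ni(2), of "Im z"] z(2) by linarith
      qed (use ni z(2) ab in auto)
      finally show ?thesis by (simp add: NB_def)
    qed
    define I1 where "I1 t = fz t * complex_of_real (\<phi> t)" for t
    define I2 where "I2 t = indicator {a..b} t *\<^sub>R fz t" for t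
    define I3 where "I3 t = indicator {-b..-a} t *\<^sub>R fz t" for t
    have mG: "h \<in> borel_measurable G" if "h \<in> borel_measurable borel" for h :: "real \<Rightarrow> complex"
      using that by (subst measurable_cong_sets[OF sG refl])
    have m3: "I3 \<in> borel_measurable borel"
      unfolding I3_def by (rule borel_measurable_continuous_on_indicator) (auto intro!: fzc)
    have i1: "integrable G I1"
    proof (rule bounded_integral_norm(1)[OF fmG])
      show "I1 \<in> borel_measurable G" unfolding I1_def fz_def by (rule mG, rule far_meas(1)[OF \<phi>m])
      fix t
      show "cmod (I1 t) \<le> 1 / (dd / 2)"
      proof (cases "\<phi> t = 0")
        case True thus ?thesis using dd by (simp add: I1_def)
      next
        case False
        have "cmod (I1 t) = cmod ((1 + complex_of_real (t\<^sup>2)) / (1 - z * complex_of_real (t\<^sup>2))) * \<bar>\<phi> t\<bar>"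
          by (simp only: I1_def fz_def norm_mult norm_of_real)
        also have "\<dots> \<le> 1 / (dd / 2) * 1"
          by (intro mult_mono far_bound_f) (use farbd z(1) False \<phi>b dd in auto)
        finally show ?thesis by simp
      qed
    qed
    have i2: "integrable G I2"
    proof (rule bounded_integral_norm(1)[OF fmG])
      show "I2 \<in> borel_measurable G" unfolding I2_def
        by (rule mG, rule borel_measurable_continuous_on_indicator) (auto intro!: fzc)
      fix t show "cmod (I2 t) \<le> NB"
        using fzb[of t] NB0 ab by (auto simp: I2_def split: split_indicator)
    qed
    have i3: "integrable G I3"
    proof (rule bounded_integral_norm(1)[OF fmG])
      show "I3 \<in> borel_measurable G" by (rule mG[OF m3])
      fix t show "cmod (I3 t) \<le> NB"
        using fzb[of t] NB0 ab by (auto simp: I3_def split: split_indicator)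
    qed
    have "integral\<^sup>L G fz = integral\<^sup>L G (\<lambda>t. I1 t + I2 t + I3 t)"
      by (intro Bochner_Integration.integral_cong)
         (use ab in \<open>auto simp: I1_def I2_def I3_def \<phi>_def split: split_indicator\<close>)
    also have "\<dots> = integral\<^sup>L G I1 + integral\<^sup>L G I2 + integral\<^sup>L G I3"
      using i1 i2 i3 by simp
    also have "integral\<^sup>L G I3 = integral\<^sup>L G I2"
    proof -
      have "integral\<^sup>L G I2 = integral\<^sup>L G (\<lambda>t. I3 (- t))"
        by (intro Bochner_Integration.integral_cong) (auto simp: I2_def I3_def fz_def split: split_indicator)
      also have "\<dots> = integral\<^sup>L G I3" by (rule sym_integral[OF symG m3])
      finally show ?thesis by simp
    qed
    also have "integral\<^sup>L G I2 = integral {a..b} (\<lambda>t. g t *\<^sub>R fz t)"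
      unfolding I2_def by (rule dens_integral[OF symG densG ab(1) gc gpos' fzc]) auto
    also have "integral {a..b} (\<lambda>t. g t *\<^sub>R fz t) = E z"
    proof -
      define w where "w = W z"
      have wV: "w \<in> V" and wD: "w \<in> ?D" using Bprops(4)[OF z(1)] VD by (auto simp: w_def)
      have Imw: "Im w < 0" using Im_csqrt_pos(2)[OF z(2)] by (simp add: w_def W_def)
      have zw2: "z * w^2 = 1" using Bprops(2)[OF z(1)] by (simp add: w_def W_def power_divide)
      have wnr: "w - of_real t \<noteq> 0" "w + of_real t \<noteq> 0" for t :: real
        using Imw by (auto simp: complex_eq_iff)
      have wnr': "w \<noteq> of_real t" "w \<noteq> - of_real t" "of_real t + w \<noteq> 0" for t :: real
        using Imw by (auto simp: complex_eq_iff)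
      have w0: "w \<noteq> 0" using Imw by auto
      have z0: "z \<noteq> 0" using Bprops(2)[OF z(1)] .
      have "integral {a..b} (\<lambda>t. g t *\<^sub>R fz t) =
            integral (cbox a b) (\<lambda>t. (p (of_real t) / (w - of_real t) + p (of_real t) / (w + of_real t)) / (2 * z * w))"
      proof (subst cbox_interval, rule integral_cong)
        fix t assume t: "t \<in> {a..b}"
        have "1 - z * (complex_of_real t)^2 \<noteq> 0" using nz[of t] t ab by auto
        from pf_identity[OF zw2 wnr(1)[of t] wnr(2)[of t] z0 w0, of "p (of_real t)"]
        show "g t *\<^sub>R fz t = (p (of_real t) / (w - of_real t) + p (of_real t) / (w + of_real t)) / (2 * z * w)"
          using preal[OF t] by (simp add: fz_def scaleR_conv_of_real algebra_simps)
      qed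
      also have "\<dots> = (integral (cbox a b) (\<lambda>t. p (of_real t) / (w - of_real t)) +
                        integral (cbox a b) (\<lambda>t. p (of_real t) / (w + of_real t))) / (2 * z * w)"
      proof -
        have j1: "(\<lambda>t. p (of_real t) / (w - of_real t)) integrable_on cbox a b"
          by (auto intro!: integrable_continuous_real continuous_intros pc' simp: wnr wnr')
        have j2: "(\<lambda>t. p (of_real t) / (w + of_real t)) integrable_on cbox a b"
          by (auto intro!: integrable_continuous_real continuous_intros pc' simp: wnr wnr')
        show ?thesis by (simp only: integral_divide integral_add[OF j1 j2])
      qed
      also have "integral (cbox a b) (\<lambda>t. p (of_real t) / (w - of_real t)) = NQ w + p w * NL w"
        unfolding NQ_def NL_def by (rule S_decomp[OF d0 abD ab(4) wD Imw])
      also have "integral (cbox a b) (\<lambda>t. p (of_real t) / (w + of_real t)) = NR w"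
        by (simp add: NR_def)
      finally show ?thesis by (simp add: E_def w_def)
    qed
    finally have e1: "integral\<^sup>L G fz = integral\<^sup>L G I1 + 2 * E z" by simp
    have e2: "integral\<^sup>L G I1 = P z" unfolding P_def I1_def fz_def ..
    have e3: "C z = z * integral\<^sup>L G fz"
      using C_levy slit unfolding levy_R_def fz_def by simp
    have "C z = z * (P z + 2 * E z)" using e1 e2 e3 by simp
    thus ?thesis by (simp add: F_def)
  qed
  have Fpos: "Im (F (complex_of_real x)) > 0"
  proof -
    let ?X = "complex_of_real x" and ?T = "complex_of_real t0"
    have t0ab: "t0 \<in> {a..b}" using ab by auto
    have t0D: "?T \<in> ?D" by (rule abD[OF t0ab])
    have realify: "z = of_real (Re z)" if "Im z = 0" for z :: complex
      using that by (simp add: complex_eq_iff)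
    have ImP: "Im (P ?X) = 0"
    proof -
      have "(\<lambda>t. (1 + complex_of_real (t\<^sup>2)) / (1 - ?X * complex_of_real (t\<^sup>2)) * complex_of_real (\<phi> t))
          = (\<lambda>t. complex_of_real ((1 + t\<^sup>2) / (1 - x * t\<^sup>2) * \<phi> t))"
        by (simp add: fun_eq_iff)
      hence "P ?X = of_real (integral\<^sup>L G (\<lambda>t. (1 + t\<^sup>2) / (1 - x * t\<^sup>2) * \<phi> t))"
        unfolding P_def by (simp only: integral_complex_of_real)
      thus ?thesis by simp
    qed
    have ImQ: "Im (NQ ?T) = 0"
      unfolding NQ_def
    proof (rule Im_integral_real[of "{t0}"])
      fix t assume t: "t \<in> cbox a b - {t0}"
      hence tab: "t \<in> {a..b}" and tt: "t \<noteq> t0" by auto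
      have ne: "complex_of_real t \<noteq> ?T" using tt by simp
      have "- integral (cbox 0 1) (\<lambda>u. p1 (?T + of_real u * (of_real t - ?T))) = (p (of_real t) - p ?T) / (?T - of_real t)"
        by (rule q_formula[OF d0 t0D abD[OF tab] ne])
      also have "\<dots> = of_real (((1 + t^2) * g t - (1 + t0^2) * g t0) / (t0 - t))"
        using preal[OF tab] preal[OF t0ab] by simp
      finally show "Im (- integral (cbox 0 1) (\<lambda>u. p1 (?T + of_real u * (of_real t - ?T)))) = 0"
        by (simp only: Im_complex_of_real)
    qed simp
    have ImR: "Im (NR ?T) = 0"
      unfolding NR_def
    proof (rule Im_integral_real[of "{}"])
      fix t assume t: "t \<in> cbox a b - {}"
      hence tab: "t \<in> {a..b}" by auto
      have "p (of_real t) / (?T + of_real t) = of_real ((1 + t^2) * g t / (t0 + t))"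
        using preal[OF tab] by simp
      thus "Im (p (of_real t) / (?T + of_real t)) = 0" by (simp only: Im_complex_of_real)
    qed simp
    have NLT: "NL ?T = of_real (ln (t0 - a) - ln (b - t0)) + \<i> * pi"
    proof -
      have "Ln (?T - of_real a) = of_real (ln (t0 - a))"
        using ab by (simp flip: of_real_diff add: Ln_of_real)
      moreover have "Ln (of_real b - ?T) = of_real (ln (b - t0))"
        using ab by (simp flip: of_real_diff add: Ln_of_real)
      ultimately show ?thesis by (simp add: NL_def)
    qed
    define B where "B = (1 + t0^2) * g t0"
    have B: "B > 0" using gpos t0 by (simp add: B_def add_pos_nonneg)
    have pT: "p ?T = of_real B" using preal[OF t0ab] by (simp add: B_def)
    define qr where "qr = Re (NQ ?T)"
    define rr where "rr = Re (NR ?T)"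
    define pr where "pr = Re (P ?X)"
    have eQ: "NQ ?T = of_real qr" using realify[OF ImQ] by (simp add: qr_def)
    have eR: "NR ?T = of_real rr" using realify[OF ImR] by (simp add: rr_def)
    have eP: "P ?X = of_real pr" using realify[OF ImP] by (simp add: pr_def)
    define lr where "lr = ln (t0 - a) - ln (b - t0)"
    have "F ?X = ?X * (of_real pr + 2 * ((of_real qr + of_real B * (of_real lr + \<i> * pi) + of_real rr) / (2 * ?X * ?T)))"
      unfolding F_def E_def Wx eQ eR eP pT NLT lr_def by simp
    also have "\<dots> = of_real x * (of_real pr + (of_real qr + of_real B * (of_real lr + \<i> * pi) + of_real rr) / of_real (x * t0))"
    proof -
      have aux: "X \<noteq> 0 \<Longrightarrow> T \<noteq> 0 \<Longrightarrow> 2 * (N / (2 * X * T)) = N / (X * T)" for N X T :: complex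
        by (simp add: field_simps)
      have X0: "?X \<noteq> 0" and T0: "?T \<noteq> 0" using x t0 by auto
      show ?thesis by (simp only: aux[OF X0 T0] of_real_mult)
    qed
    finally have "Im (F ?X) = x * (B * pi / (x * t0))"
      by (simp add: Im_divide_of_real del: of_real_mult)
    also have "\<dots> > 0" using x t0 B by (simp add: pi_gt_zero)
    finally show ?thesis .
  qed
  show "\<exists>r>0. \<exists>F. F holomorphic_on ball (complex_of_real x) r
                  \<and> (\<forall>z\<in>ball (complex_of_real x) r. Im z > 0 \<longrightarrow> F z = C z)
                  \<and> Im (F (complex_of_real x)) > 0"
    using r(1) Fholo agree Fpos by blast
qed

end
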